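(* Let $\omega$ be an inner function with $\omega(0)=0$, let $F=\ell\circ\omega$, and let $\varphi$ be an analytic self-map of $\mathbb{D}$. Then $T_{F,\varphi}(f)\in\mathcal{P}$ for every $f\in\mathcal{P}$ if and only if $\varphi\equiv 0$.
   Context: $\mathbb{D}$ is the open unit disk. $\mathcal{P}$ is the set of analytic $f$ on $\mathbb{D}$ with $\mathrm{Re}\,f>0$ and $f(0)=1$. $\ell(z)=\frac{1+z}{1-z}$. An inner function is an analytic $\omega$ on $\mathbb{D}$ with $|\omega|\le 1$ and radial limits of modulus $1$ almost everywhere on the unit circle. $T_{F,\varphi}(f)=F\cdot(f\circ\varphi)$. *)

theory Defs
  imports "HOL-Analysis.Analysis"
begin

definition unit_disc :: "complex set" where
  "unit_disc = ball 0 1"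

definition caratheodory_class :: "(complex \<Rightarrow> complex) set" where
  "caratheodory_class = {f. f analytic_on unit_disc \<and> (\<forall>z\<in>unit_disc. Re (f z) > 0) \<and> f 0 = 1}"

definition ell :: "complex \<Rightarrow> complex" where
  "ell z = (1 + z) / (1 - z)"

definition inner_function :: "(complex \<Rightarrow> complex) \<Rightarrow> bool" where
  "inner_function w \<longleftrightarrow> w analytic_on unit_disc \<and> (\<forall>z\<in>unit_disc. cmod (w z) \<le> 1) \<and>
     {\<theta> \<in> {0..2*pi}. \<not> (\<exists>L. cmod L = 1 \<and>
          ((\<lambda>r::real. w (complex_of_real r * cis \<theta>)) \<longlongrightarrow> L) (at_left 1))} \<in> null_sets lborel"

definition weighted_comp :: "(complex \<Rightarrow> complex) \<Rightarrow> (complex \<Rightarrow> complex) \<Rightarrow> (complex \<Rightarrow> complex) \<Rightarrow> (complex \<Rightarrow> complex)" where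
  "weighted_comp F \<phi> f = (\<lambda>z. F z * f (\<phi> z))"

end

theory Submission imports Defs "HOL-Complex_Analysis.Complex_Analysis" begin


lemma ell_alt: assumes "a \<noteq> 1" shows "ell a = (1 + a) * cnj (1 - a) / of_real ((cmod (1 - a))^2)"
  using assms unfolding ell_def
  by (metis (no_types, lifting) complex_div_cnj)

lemma re_ell_prod: assumes "a \<noteq> 1" "b \<noteq> 1"
  shows "Re (ell a * ell b) = ((1 - (cmod a)^2) * (1 - (cmod b)^2) - 4 * Im a * Im b) / ((cmod (1-a))^2 * (cmod (1-b))^2)"
proof -
  have "ell a * ell b = ((1 + a) * cnj (1 - a)) * ((1 + b) * cnj (1 - b)) / of_real ((cmod (1 - a))^2 * (cmod (1 - b))^2)"
    using assms by (simp add: ell_alt)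
  also have "Re \<dots> = Re (((1 + a) * cnj (1 - a)) * ((1 + b) * cnj (1 - b))) / ((cmod (1 - a))^2 * (cmod (1 - b))^2)"
    by (simp add: Re_divide_of_real)
  also have "Re (((1 + a) * cnj (1 - a)) * ((1 + b) * cnj (1 - b))) = (1 - (cmod a)^2) * (1 - (cmod b)^2) - 4 * Im a * Im b"
    unfolding cmod_power2 by (simp add: algebra_simps power2_eq_square)
  finally show ?thesis .
qed

lemma ell_0 [simp]: "ell 0 = 1" by (simp add: ell_def)

lemma re_ell: assumes "a \<noteq> 1" shows "Re (ell a) = (1 - (cmod a)^2) / (cmod (1-a))^2"
  using re_ell_prod[OF assms, of 0] by simp

lemma re_ell_pos: assumes "cmod a < 1" shows "Re (ell a) > 0"
proof -
  have "a \<noteq> 1" using assms by auto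
  hence "cmod (1 - a) > 0" by auto
  moreover have "(cmod a)^2 < 1" using assms by (simp add: power_less_one_iff abs_square_less_1)
  ultimately show ?thesis using re_ell[OF \<open>a \<noteq> 1\<close>] by simp
qed

lemma ell_holo: assumes "g holomorphic_on S" "\<And>z. z \<in> S \<Longrightarrow> cmod (g z) < 1"
  shows "(\<lambda>z. ell (g z)) holomorphic_on S"
proof -
  have "(\<lambda>z. (1 + g z) / (1 - g z)) holomorphic_on S"
    using assms by (intro holomorphic_intros) (auto dest: assms(2))
  thus ?thesis by (simp add: ell_def)
qed

lemma open_disc: "open unit_disc" by (simp add: unit_disc_def)
lemma conn_disc: "connected unit_disc" by (simp add: unit_disc_def)
lemma zero_disc: "0 \<in> unit_disc" by (simp add: unit_disc_def)

lemma ell_rot_in: assumes "cmod c \<le> 1" shows "(\<lambda>w. ell (c * w)) \<in> caratheodory_class"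
proof -
  have lt: "cmod (c * w) < 1" if "w \<in> unit_disc" for w
  proof -
    have "cmod w < 1" using that by (simp add: unit_disc_def)
    hence "cmod c * cmod w < 1"
      using assms by (metis mult_le_cancel_right1 norm_ge_zero order_le_less_trans mult_left_le_one_le le_less)
    thus ?thesis by (simp add: norm_mult)
  qed
  have "(\<lambda>w. ell (c * w)) holomorphic_on unit_disc"
    by (rule ell_holo) (auto intro!: holomorphic_intros lt)
  hence "(\<lambda>w. ell (c * w)) analytic_on unit_disc" using open_disc by (simp add: analytic_on_open)
  thus ?thesis unfolding caratheodory_class_def using lt re_ell_pos by auto
qed

lemma inner_lt1: assumes "inner_function \<omega>" "\<omega> 0 = 0" "z \<in> unit_disc"
  shows "cmod (\<omega> z) < 1"
proof (rule ccontr)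
  assume "\<not> cmod (\<omega> z) < 1"
  hence eq: "cmod (\<omega> z) = 1" using assms unfolding inner_function_def by force
  have hol: "\<omega> holomorphic_on unit_disc" using assms open_disc by (simp add: inner_function_def analytic_on_open)
  have "\<omega> constant_on unit_disc"
    by (rule maximum_modulus_principle[OF hol open_disc conn_disc open_disc order_refl assms(3)])
       (use assms eq in \<open>auto simp: inner_function_def\<close>)
  then obtain y where "\<forall>x\<in>unit_disc. \<omega> x = y" by (auto simp: constant_on_def)
  hence "\<omega> z = \<omega> 0" using assms zero_disc by auto
  thus False using eq assms by simp
qed

lemma pointwise:
  assumes H: "\<forall>f\<in>caratheodory_class. weighted_comp (ell \<circ> \<omega>) \<phi> f \<in> caratheodory_class"
    and phi: "\<phi> ` unit_disc \<subseteq> unit_disc" and z: "z \<in> unit_disc"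
  shows "cmod (\<omega> z) < 1 \<and> cmod (\<phi> z * (1 - (\<omega> z)^2)) \<le> 3/2 * (1 - (cmod (\<omega> z))^2)"
proof -
  define a where "a = \<omega> z"
  define b where "b = \<phi> z"
  have bl: "cmod b < 1" using phi z unfolding b_def unit_disc_def by (auto simp: subset_iff)
  define s :: real where "s = (if Im a \<ge> 0 then 1 else -1)"
  define c where "c = (if b = 0 then 0 else \<i> * of_real s * cnj b / of_real (cmod b))"
  have cn: "cmod c \<le> 1" by (auto simp: c_def s_def norm_mult norm_divide)
  have bb: "b * cnj b = of_real (cmod b) * of_real (cmod b)"
    by (metis complex_norm_square of_real_mult power2_eq_square)
  have cb: "Im a * Im (c * b) = \<bar>Im a\<bar> * cmod b"
  proof (cases "b = 0")
    case False
    have "c * b = \<i> * of_real (s * cmod b)"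
      using False by (simp add: c_def bb field_simps)
    thus ?thesis by (auto simp: s_def)
  qed (simp add: c_def)
  have cbn: "cmod (c * b) < 1"
    using cn bl by (simp add: norm_mult) (metis mult_le_cancel_right1 norm_ge_zero order_le_less_trans mult_left_le_one_le less_eq_real_def)
  have "weighted_comp (ell \<circ> \<omega>) \<phi> (\<lambda>w. ell (c * w)) \<in> caratheodory_class"
    using H ell_rot_in[OF cn] by blast
  hence pos: "Re (ell a * ell (c * b)) > 0" using z
    by (auto simp: caratheodory_class_def weighted_comp_def a_def b_def)
  have a1: "a \<noteq> 1" using pos by (auto simp: ell_def)
  have cb1: "c * b \<noteq> 1" using cbn by auto
  have num: "(1 - (cmod a)^2) * (1 - (cmod (c*b))^2) - 4 * Im a * Im (c * b) > 0"
  proof -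
    have d: "(cmod (1-a))^2 * (cmod (1-c*b))^2 > 0" using a1 cb1 by simp
    have "0 < ((1 - (cmod a)^2) * (1 - (cmod (c*b))^2) - 4 * Im a * Im (c * b)) / ((cmod (1-a))^2 * (cmod (1-c*b))^2)"
      using pos by (simp only: re_ell_prod[OF a1 cb1])
    thus ?thesis using d by (simp add: zero_less_divide_iff)
  qed
  have cbb: "cmod (c*b) = cmod b"
  proof (cases "b = 0")
    case False
    have "c * b = \<i> * of_real (s * cmod b)"
      using False by (simp add: c_def bb field_simps)
    thus ?thesis by (auto simp: s_def norm_mult)
  qed (simp add: c_def)
  have num2: "(1 - (cmod a)^2) * (1 - (cmod b)^2) > 4 * (\<bar>Im a\<bar> * cmod b)"
    using num cbb cb by (simp add: mult.assoc)
  have b2: "0 \<le> 1 - (cmod b)^2" "1 - (cmod b)^2 \<le> 1"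
    using bl by (auto simp: abs_square_le_1 power_le_one)
  have "0 < (1 - (cmod a)^2) * (1 - (cmod b)^2)"
    using num2 by (smt (verit) mult_nonneg_nonneg abs_ge_zero norm_ge_zero)
  hence A: "1 - (cmod a)^2 > 0" using b2 by (smt (verit) mult_nonpos_nonneg)
  hence al: "cmod a < 1" by (smt (verit) one_le_power norm_ge_zero)
  have key: "4 * (\<bar>Im a\<bar> * cmod b) \<le> 1 - (cmod a)^2"
    using num2 b2 A by (smt (verit) mult_left_le)
  have aa: "a * cnj a = of_real (cmod a) * of_real (cmod a)"
    by (metis complex_norm_square of_real_mult power2_eq_square)
  have eq: "1 - a^2 = a * (cnj a - a) + of_real (1 - (cmod a)^2)"
    by (simp add: aa algebra_simps power2_eq_square)
  have "cmod (a * (cnj a - a)) = cmod a * (2 * \<bar>Im a\<bar>)"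
  proof -
    have "cnj a - a = - (2 * \<i> * of_real (Im a))" by (simp add: complex_eq_iff)
    thus ?thesis by (simp add: norm_mult)
  qed
  hence "cmod (a * (cnj a - a)) \<le> 2 * \<bar>Im a\<bar>"
    using al by (smt (verit) abs_ge_zero mult_left_le_one_le norm_ge_zero)
  hence "cmod (1 - a^2) \<le> 2 * \<bar>Im a\<bar> + (1 - (cmod a)^2)"
    unfolding eq using A by (smt (verit) norm_triangle_ineq norm_of_real)
  hence "cmod b * cmod (1 - a^2) \<le> cmod b * (2 * \<bar>Im a\<bar> + (1 - (cmod a)^2))"
    by (simp add: mult_left_mono)
  also have "\<dots> \<le> 3/2 * (1 - (cmod a)^2)"
  proof -
    have "cmod b * (1 - (cmod a)^2) \<le> 1 - (cmod a)^2"
      using bl A by (intro mult_left_le_one_le) auto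
    thus ?thesis using key by (simp add: distrib_left mult.commute)
  qed
  finally show ?thesis using al by (simp add: a_def b_def norm_mult)
qed


lemma circle_bound:
  assumes hol: "K holomorphic_on unit_disc" and r: "0 < r" "r < 1"
  shows "cmod ((deriv ^^ n) K 0) / fact n * r ^ n \<le> integral {0..1} (\<lambda>t. cmod (K (circlepath 0 r t)))"
proof -
  have sub: "cball 0 r \<subseteq> unit_disc" using r by (auto simp: unit_disc_def)
  have contK: "continuous_on unit_disc K" using hol by (rule holomorphic_on_imp_continuous_on)
  have "((\<lambda>u. K u / (u - 0) ^ (Suc n)) has_contour_integral ((2 * pi * \<i>) / (fact n) * (deriv ^^ n) K 0)) (circlepath 0 r)"
  proof (rule Cauchy_has_contour_integral_higher_derivative_circlepath)
    show "continuous_on (cball 0 r) K" using contK sub by (rule continuous_on_subset)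
    show "K holomorphic_on ball 0 r" using hol by (rule holomorphic_on_subset) (use sub ball_subset_cball[of 0 r] in blast)
    show "0 \<in> ball 0 r" using r by simp
  qed
  hence I: "((\<lambda>x. K (circlepath 0 r x) / (circlepath 0 r x) ^ (Suc n) * vector_derivative (circlepath 0 r) (at x within {0..1}))
            has_integral ((2 * pi * \<i>) / (fact n) * (deriv ^^ n) K 0)) {0..1}"
    by (simp add: has_contour_integral_def)
  have path_in: "circlepath 0 r t \<in> unit_disc" for t
  proof -
    have "cmod (circlepath 0 r t) = r" using r by (simp add: circlepath norm_mult)
    thus ?thesis using r by (simp add: unit_disc_def)
  qed
  have contc: "continuous_on {0..1} (\<lambda>t. cmod (K (circlepath 0 r t)))"
    by (intro continuous_intros continuous_on_compose2[OF contK])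
       (auto simp: path_in intro: path_circlepath[unfolded path_def])
  hence intg: "(\<lambda>t. 2 * pi / r ^ n * cmod (K (circlepath 0 r t))) integrable_on {0..1}"
    by (intro integrable_continuous_interval continuous_on_mult continuous_on_const)
  have "norm (integral {0..1} (\<lambda>x. K (circlepath 0 r x) / (circlepath 0 r x) ^ (Suc n) * vector_derivative (circlepath 0 r) (at x within {0..1}))) \<le> integral {0..1} (\<lambda>t. 2 * pi / r ^ n * cmod (K (circlepath 0 r t)))"
  proof (rule integral_norm_bound_integral[OF has_integral_integrable[OF I] intg])
    fix t :: real assume t: "t \<in> {0..1}"
    have "norm (K (circlepath 0 r t) / (circlepath 0 r t) ^ (Suc n) * vector_derivative (circlepath 0 r) (at t within {0..1}))
        = cmod (K (circlepath 0 r t)) / r ^ Suc n * (2 * pi * r)"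
    proof -
      have vd: "vector_derivative (circlepath 0 r) (at t within {0..1}) = 2 * pi * \<i> * r * exp(2 * of_real pi * \<i> * t)"
        using t by (simp add: vector_derivative_circlepath01)
      show ?thesis unfolding vd using t r by (simp add: circlepath norm_mult norm_divide norm_power)
    qed
    also have "\<dots> = 2 * pi / r ^ n * cmod (K (circlepath 0 r t))"
      using r by (simp add: field_simps)
    finally show "norm (K (circlepath 0 r t) / (circlepath 0 r t) ^ (Suc n) * vector_derivative (circlepath 0 r) (at t within {0..1}))
        \<le> 2 * pi / r ^ n * cmod (K (circlepath 0 r t))" by simp
  qed
  hence "2 * pi / fact n * cmod ((deriv ^^ n) K 0) \<le> 2 * pi / r ^ n * integral {0..1} (\<lambda>t. cmod (K (circlepath 0 r t)))"
    unfolding integral_unique[OF I] integral_mult_right by (simp add: norm_mult norm_divide)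
  thus ?thesis using r by (simp add: field_simps)
qed


definition rr :: "nat \<Rightarrow> real" where "rr j = 1 - inverse (real (Suc j)) / 2"

lemma rr_bounds: "0 < rr j" "rr j < 1"
  by (auto simp: rr_def field_simps)

lemma rr_lim: "rr \<longlonglongrightarrow> 1"
proof -
  have "(\<lambda>j. 1 - inverse (real (Suc j)) / 2) \<longlonglongrightarrow> 1 - 0 / 2"
    by (intro tendsto_intros LIMSEQ_inverse_real_of_nat) simp
  thus ?thesis by (simp add: rr_def[abs_def])
qed

lemma rr_left: "filterlim rr (at_left 1) sequentially"
proof -
  have "\<forall>j. rr j \<in> {..<1} \<and> rr j \<noteq> 1" using rr_bounds(2) by (auto simp: less_imp_neq)
  thus ?thesis by (simp add: filterlim_at rr_lim always_eventually)
qed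

lemma circ_eq: "circlepath 0 r t = complex_of_real r * cis (2 * pi * t)"
  by (simp add: circlepath cis_conv_exp mult_ac)

lemma cont_omega_circ:
  assumes "\<omega> holomorphic_on unit_disc" "0 < r" "r < 1"
  shows "continuous_on {0..1} (\<lambda>t. \<omega> (circlepath 0 r t))"
proof -
  have path_in: "circlepath 0 r t \<in> unit_disc" for t
  proof -
    have "cmod (circlepath 0 r t) = r" using assms by (simp add: circlepath norm_mult)
    thus ?thesis using assms by (simp add: unit_disc_def)
  qed
  show ?thesis
    by (rule continuous_on_compose2[OF holomorphic_on_imp_continuous_on[OF assms(1)]])
       (auto simp: path_in intro: path_circlepath[unfolded path_def])
qed

lemma inner_mean_lim:
  assumes inn: "inner_function \<omega>"
  shows "(\<lambda>j. integral {0..1} (\<lambda>t. 1 - (cmod (\<omega> (circlepath 0 (rr j) t)))^2)) \<longlonglongrightarrow> 0"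
proof -
  define N where "N = {\<theta> \<in> {0..2*pi}. \<not> (\<exists>L. cmod L = 1 \<and>
          ((\<lambda>r::real. \<omega> (complex_of_real r * cis \<theta>)) \<longlongrightarrow> L) (at_left 1))}"
  have N: "N \<in> null_sets lborel" using inn by (simp add: inner_function_def N_def)
  have hol: "\<omega> holomorphic_on unit_disc"
    using inn open_disc by (simp add: inner_function_def analytic_on_open)
  have bnd: "cmod (\<omega> z) \<le> 1" if "z \<in> unit_disc" for z using inn that by (simp add: inner_function_def)
  have negN: "negligible N" using N by (simp add: negligible_iff_null_sets null_sets_completionI)
  define T0 where "T0 = {t \<in> {0..1}. 2 * pi * t \<in> N}"
  have "T0 \<subseteq> (\<lambda>\<theta>. \<theta> / (2 * pi)) ` N"
    unfolding T0_def by (auto intro!: image_eqI)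
  moreover have "negligible ((\<lambda>\<theta>. \<theta> / (2 * pi)) ` N)"
    by (rule negligible_differentiable_image_negligible[OF _ negN]) (auto simp: differentiable_on_def differentiable_def intro!: derivative_eq_intros)
  ultimately have negT: "negligible T0" using negligible_subset by blast
  define S where "S = {0..1} - T0"
  define f where "f j t = 1 - (cmod (\<omega> (circlepath 0 (rr j) t)))^2" for j t
  have path_in: "circlepath 0 (rr j) t \<in> unit_disc" for j t
  proof -
    have "cmod (circlepath 0 (rr j) t) = rr j" using rr_bounds[of j] by (simp add: circlepath norm_mult)
    thus ?thesis using rr_bounds[of j] by (simp add: unit_disc_def)
  qed
  have fi: "f j integrable_on {0..1}" for j
    unfolding f_def using cont_omega_circ[OF hol rr_bounds]
    by (intro integrable_continuous_interval continuous_intros) auto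
  have eqS: "integral S (f j) = integral {0..1} (f j)" for j
    unfolding S_def by (rule integral_spike_set) (auto intro: negligible_subset[OF negT])
  have fiS: "f j integrable_on S" for j
    using fi[of j] unfolding S_def by (rule integrable_spike_set) (auto intro: negligible_subset[OF negT])
  have conv: "(\<lambda>j. f j t) \<longlonglongrightarrow> 0" if t: "t \<in> S" for t
  proof -
    have "2 * pi * t \<in> {0..2*pi}" "2 * pi * t \<notin> N" using t by (auto simp: S_def T0_def)
    then obtain L where L: "cmod L = 1" "((\<lambda>r::real. \<omega> (complex_of_real r * cis (2*pi*t))) \<longlongrightarrow> L) (at_left 1)"
      unfolding N_def by blast
    have "((\<lambda>j. \<omega> (complex_of_real (rr j) * cis (2*pi*t))) \<longlongrightarrow> L) sequentially"
      using filterlim_compose[OF L(2) rr_left] by (simp add: o_def)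
    hence "(\<lambda>j. 1 - (cmod (\<omega> (complex_of_real (rr j) * cis (2*pi*t))))^2) \<longlonglongrightarrow> 1 - (cmod L)^2"
      by (intro tendsto_intros)
    thus ?thesis using L(1) by (simp add: f_def circ_eq)
  qed
  have "(\<lambda>j. integral S (f j)) \<longlonglongrightarrow> integral S (\<lambda>t. 0)"
  proof (rule dominated_convergence(2)[OF fiS, where h = "\<lambda>_. 1"])
    show "(\<lambda>_. 1::real) integrable_on S"
      unfolding S_def by (rule integrable_spike_set[OF integrable_const_ivl]) (auto intro: negligible_subset[OF negT])
    show "norm (f j t) \<le> 1" if "t \<in> S" for j t
      using bnd[OF path_in[of j t]] by (auto simp: f_def abs_square_le_1 power_le_one)
  qed (rule conv)
  hence "(\<lambda>j. integral {0..1} (f j)) \<longlonglongrightarrow> 0" by (simp add: eqS)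
  moreover have "f j = (\<lambda>t. 1 - (cmod (\<omega> (circlepath 0 (rr j) t)))^2)" for j by (rule ext) (simp add: f_def)
  ultimately show ?thesis by simp
qed


theorem proposition3p2:
  fixes \<omega> \<phi> :: "complex \<Rightarrow> complex"
  assumes "inner_function \<omega>" and "\<omega> 0 = 0"
    and "\<phi> analytic_on unit_disc" and "\<phi> ` unit_disc \<subseteq> unit_disc"
  shows "(\<forall>f\<in>caratheodory_class. weighted_comp (ell \<circ> \<omega>) \<phi> f \<in> caratheodory_class)
         \<longleftrightarrow> (\<forall>z\<in>unit_disc. \<phi> z = 0)"
proof
  have holw: "\<omega> holomorphic_on unit_disc"
    using assms(1) open_disc by (simp add: inner_function_def analytic_on_open)
  have holp: "\<phi> holomorphic_on unit_disc"
    using assms(3) open_disc by (simp add: analytic_on_open)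
  assume H: "\<forall>f\<in>caratheodory_class. weighted_comp (ell \<circ> \<omega>) \<phi> f \<in> caratheodory_class"
  show "\<forall>z\<in>unit_disc. \<phi> z = 0"
  proof (rule ccontr)
    assume "\<not> (\<forall>z\<in>unit_disc. \<phi> z = 0)"
    then obtain z0 where z0: "z0 \<in> unit_disc" "\<phi> z0 \<noteq> 0" by blast
    define K where "K z = \<phi> z * (1 - (\<omega> z)^2)" for z
    have holK: "K holomorphic_on unit_disc"
      unfolding K_def[abs_def] using holw holp by (intro holomorphic_intros)
    have PW: "cmod (\<omega> z) < 1 \<and> cmod (K z) \<le> 3/2 * (1 - (cmod (\<omega> z))^2)" if "z \<in> unit_disc" for z
      using pointwise[OF H assms(4) that] by (simp add: K_def)
    have "K z0 \<noteq> 0"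
    proof -
      have "cmod (\<omega> z0) < 1" using PW z0 by blast
      hence "cmod ((\<omega> z0)^2) < 1" by (simp add: norm_power power_less_one_iff)
      hence "(\<omega> z0)^2 \<noteq> 1" by auto
      thus ?thesis using z0 by (simp add: K_def)
    qed
    have "\<exists>n. (deriv ^^ n) K 0 \<noteq> 0"
    proof (rule ccontr)
      assume A0: "\<not> (\<exists>n. (deriv ^^ n) K 0 \<noteq> 0)"
      have "K z0 = K 0"
        by (rule holomorphic_fun_eq_const_on_connected[OF holK open_disc conn_disc]) (use A0 zero_disc z0 in auto)
      moreover have "K 0 = 0" using A0 by (metis funpow_0)
      ultimately show False using \<open>K z0 \<noteq> 0\<close> by simp
    qed
    then obtain n where n: "(deriv ^^ n) K 0 \<noteq> 0" by blast
    define D where "D = cmod ((deriv ^^ n) K 0) / fact n"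
    have Dpos: "D > 0" using n by (simp add: D_def)
    have cmp: "D * rr j ^ n \<le> 3/2 * integral {0..1} (\<lambda>t. 1 - (cmod (\<omega> (circlepath 0 (rr j) t)))^2)" for j
    proof -
      have path_in: "circlepath 0 (rr j) t \<in> unit_disc" for t
      proof -
        have "cmod (circlepath 0 (rr j) t) = rr j" using rr_bounds[of j] by (simp add: circlepath norm_mult)
        thus ?thesis using rr_bounds[of j] by (simp add: unit_disc_def)
      qed
      have "D * rr j ^ n \<le> integral {0..1} (\<lambda>t. cmod (K (circlepath 0 (rr j) t)))"
        unfolding D_def by (rule circle_bound[OF holK rr_bounds])
      also have "\<dots> \<le> integral {0..1} (\<lambda>t. 3/2 * (1 - (cmod (\<omega> (circlepath 0 (rr j) t)))^2))"
      proof (rule integral_le)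
        show "(\<lambda>t. cmod (K (circlepath 0 (rr j) t))) integrable_on {0..1}"
          using cont_omega_circ[OF holK rr_bounds]
          by (intro integrable_continuous_interval continuous_intros) auto
        show "(\<lambda>t. 3/2 * (1 - (cmod (\<omega> (circlepath 0 (rr j) t)))^2)) integrable_on {0..1}"
          using cont_omega_circ[OF holw rr_bounds]
          by (intro integrable_continuous_interval continuous_intros) auto
        show "cmod (K (circlepath 0 (rr j) t)) \<le> 3/2 * (1 - (cmod (\<omega> (circlepath 0 (rr j) t)))^2)" for t
          using PW[OF path_in[of t]] by (rule conjunct2)
      qed
      finally show ?thesis by (simp only: integral_mult_right)
    qed
    have L1: "(\<lambda>j. D * rr j ^ n) \<longlonglongrightarrow> D * 1 ^ n"
      by (intro tendsto_intros rr_lim)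
    have L2: "(\<lambda>j. 3/2 * integral {0..1} (\<lambda>t. 1 - (cmod (\<omega> (circlepath 0 (rr j) t)))^2)) \<longlonglongrightarrow> 3/2 * 0"
      by (intro tendsto_intros inner_mean_lim assms(1))
    have "D * 1 ^ n \<le> 3/2 * 0"
      by (rule LIMSEQ_le[OF L1 L2]) (use cmp in blast)
    thus False using Dpos by simp
  qed
next
  assume Z: "\<forall>z\<in>unit_disc. \<phi> z = 0"
  have holw: "\<omega> holomorphic_on unit_disc"
    using assms(1) open_disc by (simp add: inner_function_def analytic_on_open)
  have lt: "cmod (\<omega> z) < 1" if "z \<in> unit_disc" for z using inner_lt1[OF assms(1,2) that] .
  show "\<forall>f\<in>caratheodory_class. weighted_comp (ell \<circ> \<omega>) \<phi> f \<in> caratheodory_class"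
  proof
    fix f assume f: "f \<in> caratheodory_class"
    have f0: "f 0 = 1" using f by (simp add: caratheodory_class_def)
    have eq: "weighted_comp (ell \<circ> \<omega>) \<phi> f z = ell (\<omega> z)" if "z \<in> unit_disc" for z
      using Z that f0 by (simp add: weighted_comp_def)
    have "(\<lambda>z. ell (\<omega> z)) holomorphic_on unit_disc" by (rule ell_holo[OF holw lt])
    hence "weighted_comp (ell \<circ> \<omega>) \<phi> f holomorphic_on unit_disc"
      by (rule holomorphic_transform) (simp add: eq)
    hence "weighted_comp (ell \<circ> \<omega>) \<phi> f analytic_on unit_disc"
      using open_disc by (simp add: analytic_on_open)
    moreover have "\<forall>z\<in>unit_disc. Re (weighted_comp (ell \<circ> \<omega>) \<phi> f z) > 0"
      using eq re_ell_pos lt by simp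
    moreover have "weighted_comp (ell \<circ> \<omega>) \<phi> f 0 = 1"
      using eq[OF zero_disc] assms(2) by simp
    ultimately show "weighted_comp (ell \<circ> \<omega>) \<phi> f \<in> caratheodory_class"
      by (simp add: caratheodory_class_def)
  qed
qed

end
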